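(* Let $\{(U_{k,i}, V_{k,i}); i \geq 1, k \geq 1\}$ be an array of i.i.d. two-dimensional random vectors and let $\{p_n; n \geq 1\}$ be a nondecreasing sequence of positive integers. Let $$T_n = \max_{1 \leq i \neq j \leq p_n} \Big| \sum_{k=1}^n U_{k,i} V_{k,j} \Big|, \quad n \geq 1.$$ Let $\{Y_n; n \geq 1\}$ be i.i.d. random variables with $Y_1$ having the same distribution as $U_{1,1} V_{1,2}$, and $S_n = \sum_{k=1}^n Y_k$. Let $\{a_n; n \geq 1\}$ be positive constants with $a_n \uparrow \infty$ and $$\lim_{c \downarrow 1} \limsup_{n \to \infty} \frac{a_{[cn]}}{a_n} = 1.$$ If $S_n/a_n \to 0$ in probability and $$\sum_{n=1}^{\infty} \frac{p_n^2}{n} P\Big(\frac{|S_n|}{a_n} > \lambda\Big) < \infty \quad \text{for some } 0 < \lambda < \infty,$$ then $$\limsup_{n \to \infty} \frac{T_n}{a_n} \leq \lambda \quad \text{a.s.}$$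
   Context: $[x]$ denotes the integer part of $x$. *)

theory Defs
  imports "HOL-Probability.Probability"
begin

text \<open>The maximum over an empty index set (p_n = 1) is taken to be 0; since all
  candidate values are nonnegative, inserting 0 does not change the maximum otherwise.\<close>
definition Tstat :: "(nat \<Rightarrow> nat \<Rightarrow> 'a \<Rightarrow> real) \<Rightarrow> (nat \<Rightarrow> nat \<Rightarrow> 'a \<Rightarrow> real)
    \<Rightarrow> (nat \<Rightarrow> nat) \<Rightarrow> nat \<Rightarrow> 'a \<Rightarrow> real" where
  "Tstat U V p n \<omega> = Max (insert 0
     {\<bar>\<Sum>k=1..n. U k i \<omega> * V k j \<omega>\<bar> | i j.
        1 \<le> i \<and> i \<le> p n \<and> 1 \<le> j \<and> j \<le> p n \<and> i \<noteq> j})"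

end

theory Submission
  imports Defs
begin

lemma (in prob_space) distr_indep_op:
  fixes A B A' B' :: "'a \<Rightarrow> real" and f :: "real \<Rightarrow> real \<Rightarrow> real"
  assumes i1: "indep_var borel A borel B" and i2: "indep_var borel A' borel B'"
    and dA: "distr M borel A = distr M borel A'" and dB: "distr M borel B = distr M borel B'"
    and f: "(\<lambda>(x,y). f x y) \<in> borel_measurable (borel \<Otimes>\<^sub>M borel)"
  shows "distr M borel (\<lambda>\<omega>. f (A \<omega>) (B \<omega>)) = distr M borel (\<lambda>\<omega>. f (A' \<omega>) (B' \<omega>))"
proof -
  have rv: "random_variable borel A" "random_variable borel B" "random_variable borel A'" "random_variable borel B'"
    using i1 i2 indep_var_rv1 indep_var_rv2 by blast+
  have e1: "distr M borel (\<lambda>\<omega>. f (A \<omega>) (B \<omega>)) = distr (distr M (borel \<Otimes>\<^sub>M borel) (\<lambda>\<omega>. (A \<omega>, B \<omega>))) borel (\<lambda>(x,y). f x y)"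
    using rv by (subst distr_distr) (auto intro!: f measurable_Pair simp: comp_def)
  have e2: "distr M borel (\<lambda>\<omega>. f (A' \<omega>) (B' \<omega>)) = distr (distr M (borel \<Otimes>\<^sub>M borel) (\<lambda>\<omega>. (A' \<omega>, B' \<omega>))) borel (\<lambda>(x,y). f x y)"
    using rv by (subst distr_distr) (auto intro!: f measurable_Pair simp: comp_def)
  have "distr M (borel \<Otimes>\<^sub>M borel) (\<lambda>\<omega>. (A \<omega>, B \<omega>)) = distr M (borel \<Otimes>\<^sub>M borel) (\<lambda>\<omega>. (A' \<omega>, B' \<omega>))"
    using i1 i2 dA dB unfolding indep_var_distribution_eq by metis
  then show ?thesis using e1 e2 by simp
qed

lemma (in prob_space) distr_sum_eq:
  fixes \<xi> \<eta> :: "nat \<Rightarrow> 'a \<Rightarrow> real"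
  assumes i1: "indep_vars (\<lambda>_. borel) \<xi> {1..}" and i2: "indep_vars (\<lambda>_. borel) \<eta> {1..}"
    and d: "\<And>k. k \<ge> 1 \<Longrightarrow> distr M borel (\<xi> k) = distr M borel (\<eta> k)"
  shows "distr M borel (\<lambda>\<omega>. \<Sum>k=1..m. \<xi> k \<omega>) = distr M borel (\<lambda>\<omega>. \<Sum>k=1..m. \<eta> k \<omega>)"
proof (induction m)
  case 0
  then show ?case by simp
next
  case (Suc m)
  have s1: "indep_vars (\<lambda>_. borel) \<xi> (insert (Suc m) {1..m})"
    by (rule indep_vars_subset[OF i1]) auto
  have s2: "indep_vars (\<lambda>_. borel) \<eta> (insert (Suc m) {1..m})"
    by (rule indep_vars_subset[OF i2]) auto
  have "distr M borel (\<lambda>\<omega>. \<xi> (Suc m) \<omega> + (\<Sum>k=1..m. \<xi> k \<omega>)) = distr M borel (\<lambda>\<omega>. \<eta> (Suc m) \<omega> + (\<Sum>k=1..m. \<eta> k \<omega>))"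
    by (rule distr_indep_op[OF indep_vars_sum[OF _ _ s1] indep_vars_sum[OF _ _ s2] d Suc]) auto
  then show ?case by (simp add: add.commute)
qed


lemma (in prob_space) indep_blocks:
  fixes \<xi> :: "nat \<Rightarrow> 'a \<Rightarrow> real"
  assumes ind: "indep_vars (\<lambda>_. borel) \<xi> {1..}"
    and P: "Measurable.pred (PiM {1..m} (\<lambda>_. borel)) P"
    and Q: "Measurable.pred (PiM {Suc m..n} (\<lambda>_. borel)) Q"
  shows "prob {\<omega>\<in>space M. P (restrict (\<lambda>k. \<xi> k \<omega>) {1..m}) \<and> Q (restrict (\<lambda>k. \<xi> k \<omega>) {Suc m..n})}
       = prob {\<omega>\<in>space M. P (restrict (\<lambda>k. \<xi> k \<omega>) {1..m})} * prob {\<omega>\<in>space M. Q (restrict (\<lambda>k. \<xi> k \<omega>) {Suc m..n})}"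
proof -
  have iv: "indep_var (PiM {1..m} (\<lambda>_. borel)) (\<lambda>\<omega>. restrict (\<lambda>k. \<xi> k \<omega>) {1..m})
                      (PiM {Suc m..n} (\<lambda>_. borel)) (\<lambda>\<omega>. restrict (\<lambda>k. \<xi> k \<omega>) {Suc m..n})"
    by (rule indep_var_restrict[OF ind]) auto
  let ?XA = "{f\<in>space (PiM {1..m} (\<lambda>_. borel)). P f}"
  let ?XB = "{f\<in>space (PiM {Suc m..n} (\<lambda>_. borel)). Q f}"
  have sA: "?XA \<in> sets (PiM {1..m} (\<lambda>_. borel))" using P by (simp add: pred_def)
  have sB: "?XB \<in> sets (PiM {Suc m..n} (\<lambda>_. borel))" using Q by (simp add: pred_def)
  have r1: "restrict (\<lambda>k. \<xi> k \<omega>) {1..m} \<in> space (PiM {1..m} (\<lambda>_. borel))" for \<omega>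
    by (auto simp: space_PiM)
  have r2: "restrict (\<lambda>k. \<xi> k \<omega>) {Suc m..n} \<in> space (PiM {Suc m..n} (\<lambda>_. borel))" for \<omega>
    by (auto simp: space_PiM)
  have "prob ((\<lambda>x. (restrict (\<lambda>k. \<xi> k x) {1..m}, restrict (\<lambda>k. \<xi> k x) {Suc m..n})) -` (?XA \<times> ?XB) \<inter> space M)
     = prob ((\<lambda>\<omega>. restrict (\<lambda>k. \<xi> k \<omega>) {1..m}) -` ?XA \<inter> space M) * prob ((\<lambda>\<omega>. restrict (\<lambda>k. \<xi> k \<omega>) {Suc m..n}) -` ?XB \<inter> space M)"
    by (rule indep_varD[OF iv sA sB])
  moreover have "(\<lambda>x. (restrict (\<lambda>k. \<xi> k x) {1..m}, restrict (\<lambda>k. \<xi> k x) {Suc m..n})) -` (?XA \<times> ?XB) \<inter> space M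
     = {\<omega>\<in>space M. P (restrict (\<lambda>k. \<xi> k \<omega>) {1..m}) \<and> Q (restrict (\<lambda>k. \<xi> k \<omega>) {Suc m..n})}"
    using r1 r2 by auto
  moreover have "(\<lambda>\<omega>. restrict (\<lambda>k. \<xi> k \<omega>) {1..m}) -` ?XA \<inter> space M = {\<omega>\<in>space M. P (restrict (\<lambda>k. \<xi> k \<omega>) {1..m})}"
    using r1 by auto
  moreover have "(\<lambda>\<omega>. restrict (\<lambda>k. \<xi> k \<omega>) {Suc m..n}) -` ?XB \<inter> space M = {\<omega>\<in>space M. Q (restrict (\<lambda>k. \<xi> k \<omega>) {Suc m..n})}"
    using r2 by auto
  ultimately show ?thesis by simp
qed

lemma sum_split_Suc:
  fixes f :: "nat \<Rightarrow> real"
  assumes "m \<le> n"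
  shows "(\<Sum>k=1..n. f k) = (\<Sum>k=1..m. f k) + (\<Sum>k=Suc m..n. f k)"
proof -
  have "{1..n} = {1..m} \<union> {Suc m..n}" using assms by auto
  then show ?thesis by (simp add: sum.union_disjoint[symmetric] ivl_disj_int)
qed

lemma (in prob_space) indep_sums:
  fixes \<xi> :: "nat \<Rightarrow> 'a \<Rightarrow> real"
  assumes ind: "indep_vars (\<lambda>_. borel) \<xi> {1..}" and mn: "m \<le> n"
    and A: "A \<in> sets borel" and B: "B \<in> sets borel"
  shows "prob {\<omega>\<in>space M. (\<Sum>k=1..m. \<xi> k \<omega>) \<in> A \<and> (\<Sum>k=1..n. \<xi> k \<omega>) - (\<Sum>k=1..m. \<xi> k \<omega>) \<in> B}
       = prob {\<omega>\<in>space M. (\<Sum>k=1..m. \<xi> k \<omega>) \<in> A} * prob {\<omega>\<in>space M. (\<Sum>k=1..n. \<xi> k \<omega>) - (\<Sum>k=1..m. \<xi> k \<omega>) \<in> B}"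
proof -
  have P: "Measurable.pred (PiM {1..m} (\<lambda>_. borel)) (\<lambda>f. (\<Sum>k\<in>{1..m}. f k) \<in> A)"
    using A by measurable
  have Q: "Measurable.pred (PiM {Suc m..n} (\<lambda>_. borel)) (\<lambda>f. (\<Sum>k\<in>{Suc m..n}. f k) \<in> B)"
    using B by measurable
  have e1: "(\<Sum>k\<in>{1..m}. restrict (\<lambda>k. \<xi> k \<omega>) {1..m} k) = (\<Sum>k=1..m. \<xi> k \<omega>)" for \<omega>
    by (rule sum.cong) auto
  have e2: "(\<Sum>k\<in>{Suc m..n}. restrict (\<lambda>k. \<xi> k \<omega>) {Suc m..n} k) = (\<Sum>k=1..n. \<xi> k \<omega>) - (\<Sum>k=1..m. \<xi> k \<omega>)" for \<omega>
    using sum_split_Suc[OF mn, of "\<lambda>k. \<xi> k \<omega>"] by simp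
  show ?thesis using indep_blocks[OF ind P Q] unfolding e1 e2 .
qed


lemma (in prob_space) ottaviani:
  fixes \<xi> :: "nat \<Rightarrow> 'a \<Rightarrow> real"
  assumes ind: "indep_vars (\<lambda>_. borel) \<xi> {1..}"
    and bet: "\<And>m. m \<in> {1..N} \<Longrightarrow> prob {\<omega>\<in>space M. \<bar>(\<Sum>k=1..N. \<xi> k \<omega>) - (\<Sum>k=1..m. \<xi> k \<omega>)\<bar> > s} \<le> \<beta>"
  shows "prob {\<omega>\<in>space M. \<exists>m\<in>{1..N}. \<bar>\<Sum>k=1..m. \<xi> k \<omega>\<bar> > u} * (1 - \<beta>)
          \<le> prob {\<omega>\<in>space M. \<bar>\<Sum>k=1..N. \<xi> k \<omega>\<bar> > u - s}"
proof -
  have rv: "\<And>k. k \<ge> 1 \<Longrightarrow> \<xi> k \<in> borel_measurable M" using ind by (auto simp: indep_vars_def)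
  have Sm: "(\<lambda>\<omega>. \<Sum>k=1..m. \<xi> k \<omega>) \<in> borel_measurable M" for m
    by (rule borel_measurable_sum) (use rv in auto)
  define S where "S m \<omega> = (\<Sum>k=1..m. \<xi> k \<omega>)" for m \<omega>
  define A where "A m = {\<omega>\<in>space M. \<bar>S m \<omega>\<bar> > u \<and> (\<forall>l\<in>{1..<m}. \<bar>S l \<omega>\<bar> \<le> u)}" for m
  define B where "B m = {\<omega>\<in>space M. \<bar>S N \<omega> - S m \<omega>\<bar> \<le> s}" for m
  have SmS[measurable]: "S m \<in> borel_measurable M" for m unfolding S_def using Sm[of m] by simp
  have Aev[measurable]: "A m \<in> events" for m unfolding A_def by measurable
  have Bev[measurable]: "B m \<in> events" for m unfolding B_def by measurable
  have dA: "disjoint_family_on A {1..N}"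
    unfolding disjoint_family_on_def
  proof (intro ballI impI)
    fix m n assume m: "m \<in> {1..N}" "n \<in> {1..N}" "m \<noteq> n"
    show "A m \<inter> A n = {}"
    proof (cases "m < n")
      case True then show ?thesis unfolding A_def using m by force
    next
      case False then have "n < m" using m by auto then show ?thesis unfolding A_def using m by force
    qed
  qed
  have E: "{\<omega>\<in>space M. \<exists>m\<in>{1..N}. \<bar>\<Sum>k=1..m. \<xi> k \<omega>\<bar> > u} = (\<Union>m\<in>{1..N}. A m)"
  proof (intro equalityI subsetI)
    fix \<omega> assume "\<omega> \<in> {\<omega>\<in>space M. \<exists>m\<in>{1..N}. \<bar>\<Sum>k=1..m. \<xi> k \<omega>\<bar> > u}"
    then obtain m where m: "\<omega> \<in> space M" "m \<in> {1..N}" "\<bar>S m \<omega>\<bar> > u" unfolding S_def by auto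
    define m0 where "m0 = (LEAST m. 1 \<le> m \<and> \<bar>S m \<omega>\<bar> > u)"
    have h1: "1 \<le> m0 \<and> \<bar>S m0 \<omega>\<bar> > u" unfolding m0_def by (rule LeastI[of _ m]) (use m in auto)
    have h2: "m0 \<le> m" unfolding m0_def by (rule Least_le) (use m in auto)
    have h3: "\<bar>S l \<omega>\<bar> \<le> u" if "l \<in> {1..<m0}" for l
      using not_less_Least[of l "\<lambda>m. 1 \<le> m \<and> \<bar>S m \<omega>\<bar> > u"] that unfolding m0_def[symmetric] by auto
    show "\<omega> \<in> (\<Union>m\<in>{1..N}. A m)" using h1 h2 h3 m unfolding A_def by (auto intro!: bexI[of _ m0])
  qed (auto simp: A_def S_def)
  have probE: "prob (\<Union>m\<in>{1..N}. A m) = (\<Sum>m\<in>{1..N}. prob (A m))"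
    by (rule finite_measure_finite_Union) (use dA in auto)
  have indAB: "prob (A m \<inter> B m) = prob (A m) * prob (B m)" if m: "m \<in> {1..N}" for m
  proof -
    let ?P = "\<lambda>f. \<bar>\<Sum>k\<in>{1..m}. f k\<bar> > u \<and> (\<forall>l\<in>{1..<m}. \<bar>\<Sum>k\<in>{1..l}. f k\<bar> \<le> u)"
    let ?Q = "\<lambda>f. \<bar>\<Sum>k\<in>{Suc m..N}. f k\<bar> \<le> s"
    have P: "Measurable.pred (PiM {1..m} (\<lambda>_. borel)) ?P"
    proof -
      have [measurable]: "(\<lambda>f. \<Sum>k\<in>{1..l}. f k) \<in> borel_measurable (PiM {1..m} (\<lambda>_. borel :: real measure))" if "l \<le> m" for l
        by (rule borel_measurable_sum[where f="\<lambda>k f. f k"], rule measurable_component_singleton) (use that in auto)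
      show ?thesis by measurable
    qed
    have Q: "Measurable.pred (PiM {Suc m..N} (\<lambda>_. borel)) ?Q" by measurable
    have e1: "?P (restrict (\<lambda>k. \<xi> k \<omega>) {1..m}) \<longleftrightarrow> \<bar>S m \<omega>\<bar> > u \<and> (\<forall>l\<in>{1..<m}. \<bar>S l \<omega>\<bar> \<le> u)" for \<omega>
    proof -
      have "(\<Sum>k\<in>{1..l}. restrict (\<lambda>k. \<xi> k \<omega>) {1..m} k) = S l \<omega>" if "l \<le> m" for l
        unfolding S_def by (rule sum.cong) (use that in auto)
      then show ?thesis by auto
    qed
    have e2: "?Q (restrict (\<lambda>k. \<xi> k \<omega>) {Suc m..N}) \<longleftrightarrow> \<bar>S N \<omega> - S m \<omega>\<bar> \<le> s" for \<omega>
      using sum_split_Suc[of m N "\<lambda>k. \<xi> k \<omega>"] m unfolding S_def by simp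
    have "A m \<inter> B m = {\<omega>\<in>space M. ?P (restrict (\<lambda>k. \<xi> k \<omega>) {1..m}) \<and> ?Q (restrict (\<lambda>k. \<xi> k \<omega>) {Suc m..N})}"
      "A m = {\<omega>\<in>space M. ?P (restrict (\<lambda>k. \<xi> k \<omega>) {1..m})}"
      "B m = {\<omega>\<in>space M. ?Q (restrict (\<lambda>k. \<xi> k \<omega>) {Suc m..N})}"
      unfolding e1 e2 A_def B_def by auto
    then show ?thesis using indep_blocks[OF ind P Q] by simp
  qed
  have PB: "prob (B m) \<ge> 1 - \<beta>" if m: "m \<in> {1..N}" for m
  proof -
    have "space M - B m = {\<omega>\<in>space M. \<bar>(\<Sum>k=1..N. \<xi> k \<omega>) - (\<Sum>k=1..m. \<xi> k \<omega>)\<bar> > s}"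
      unfolding B_def S_def by auto
    then have "prob (space M - B m) \<le> \<beta>" using bet[OF m] by simp
    then show ?thesis using prob_compl[OF Bev[of m]] by simp
  qed
  have sub: "(\<Union>m\<in>{1..N}. A m \<inter> B m) \<subseteq> {\<omega>\<in>space M. \<bar>\<Sum>k=1..N. \<xi> k \<omega>\<bar> > u - s}"
    unfolding A_def B_def S_def by auto
  have dAB: "disjoint_family_on (\<lambda>m. A m \<inter> B m) {1..N}"
    using dA unfolding disjoint_family_on_def by blast
  have "prob {\<omega>\<in>space M. \<exists>m\<in>{1..N}. \<bar>\<Sum>k=1..m. \<xi> k \<omega>\<bar> > u} * (1 - \<beta>) = (\<Sum>m\<in>{1..N}. prob (A m) * (1 - \<beta>))"
    unfolding E probE by (simp add: sum_distrib_right)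
  also have "\<dots> \<le> (\<Sum>m\<in>{1..N}. prob (A m \<inter> B m))"
    by (rule sum_mono) (simp add: indAB PB mult_left_mono)
  also have "\<dots> = prob (\<Union>m\<in>{1..N}. A m \<inter> B m)"
    by (rule finite_measure_finite_Union[symmetric]) (use dAB in auto)
  also have "\<dots> \<le> prob {\<omega>\<in>space M. \<bar>\<Sum>k=1..N. \<xi> k \<omega>\<bar> > u - s}"
    by (rule finite_measure_mono[OF sub]) (use Sm in measurable)
  finally show ?thesis .
qed


lemma fst_borel: "fst \<in> borel_measurable (borel :: (real \<times> real) measure)"
  by (subst borel_prod[symmetric]) simp

lemma snd_borel: "snd \<in> borel_measurable (borel :: (real \<times> real) measure)"
  by (subst borel_prod[symmetric]) simp

lemma comp_fst_borel:
  assumes "f \<in> measurable N (borel :: (real \<times> real) measure)"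
  shows "(\<lambda>x. fst (f x)) \<in> borel_measurable N"
  using measurable_compose[OF assms fst_borel] by (simp add: comp_def)

lemma comp_snd_borel:
  assumes "f \<in> measurable N (borel :: (real \<times> real) measure)"
  shows "(\<lambda>x. snd (f x)) \<in> borel_measurable N"
  using measurable_compose[OF assms snd_borel] by (simp add: comp_def)

lemma (in prob_space) xi_indep:
  fixes U V :: "nat \<Rightarrow> nat \<Rightarrow> 'a \<Rightarrow> real"
  assumes ind: "indep_vars (\<lambda>_. borel) (\<lambda>(k, i) \<omega>. (U k i \<omega>, V k i \<omega>)) ({1..} \<times> {1..})"
    and ij: "i \<ge> 1" "j \<ge> 1" "i \<noteq> j"
  shows "indep_vars (\<lambda>_. borel) (\<lambda>k \<omega>. U k i \<omega> * V k j \<omega>) {1..}"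
proof -
  let ?Z = "(\<lambda>(k, i) \<omega>. (U k i \<omega>, V k i \<omega>))"
  let ?K = "\<lambda>k::nat. {(k,i),(k,j)}"
  have r: "indep_vars (\<lambda>k. PiM (?K k) (\<lambda>_. borel)) (\<lambda>k \<omega>. restrict (\<lambda>x. ?Z x \<omega>) (?K k)) {1..}"
    by (rule indep_vars_restrict[OF ind]) (use ij in \<open>auto simp: disjoint_family_on_def\<close>)
  have c: "indep_vars (\<lambda>_. borel) (\<lambda>k \<omega>. (\<lambda>f. fst (f (k,i)) * snd (f (k,j))) (restrict (\<lambda>x. ?Z x \<omega>) (?K k))) {1..}"
  proof (rule indep_vars_compose2[OF r])
    fix k :: nat
    have a: "(\<lambda>f. f (k,i)) \<in> measurable (PiM (?K k) (\<lambda>_. borel)) (borel :: (real \<times> real) measure)"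
      by (rule measurable_component_singleton) auto
    have b: "(\<lambda>f. f (k,j)) \<in> measurable (PiM (?K k) (\<lambda>_. borel)) (borel :: (real \<times> real) measure)"
      by (rule measurable_component_singleton) auto
    show "(\<lambda>f. fst (f (k,i)) * snd (f (k,j))) \<in> borel_measurable (PiM (?K k) (\<lambda>_. borel :: (real \<times> real) measure))"
      by (intro borel_measurable_times comp_fst_borel comp_snd_borel a b)
  qed
  show ?thesis
    by (rule indep_vars_cong[THEN iffD1, OF _ _ _ c]) auto
qed

lemma (in prob_space) UV_indep_var:
  fixes U V :: "nat \<Rightarrow> nat \<Rightarrow> 'a \<Rightarrow> real"
  assumes ind: "indep_vars (\<lambda>_. borel) (\<lambda>(k, i) \<omega>. (U k i \<omega>, V k i \<omega>)) ({1..} \<times> {1..})"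
    and ij: "k \<ge> 1" "i \<ge> 1" "j \<ge> 1" "i \<noteq> j"
  shows "indep_var borel (U k i) borel (V k j)"
proof -
  let ?Z = "(\<lambda>(k, i) \<omega>. (U k i \<omega>, V k i \<omega>))"
  have r: "indep_var (PiM {(k,i)} (\<lambda>_. borel)) (\<lambda>\<omega>. restrict (\<lambda>x. ?Z x \<omega>) {(k,i)})
                     (PiM {(k,j)} (\<lambda>_. borel)) (\<lambda>\<omega>. restrict (\<lambda>x. ?Z x \<omega>) {(k,j)})"
    by (rule indep_var_restrict[OF ind]) (use ij in auto)
  have a: "(\<lambda>f. f (k,i)) \<in> measurable (PiM {(k,i)} (\<lambda>_. borel)) (borel :: (real \<times> real) measure)"
    by (rule measurable_component_singleton) auto
  have b: "(\<lambda>f. f (k,j)) \<in> measurable (PiM {(k,j)} (\<lambda>_. borel)) (borel :: (real \<times> real) measure)"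
    by (rule measurable_component_singleton) auto
  have m1: "(\<lambda>f. fst (f (k,i))) \<in> borel_measurable (PiM {(k,i)} (\<lambda>_. borel :: (real \<times> real) measure))"
    by (rule comp_fst_borel[OF a])
  have m2: "(\<lambda>f. snd (f (k,j))) \<in> borel_measurable (PiM {(k,j)} (\<lambda>_. borel :: (real \<times> real) measure))"
    by (rule comp_snd_borel[OF b])
  have "indep_var borel ((\<lambda>f. fst (f (k,i))) \<circ> (\<lambda>\<omega>. restrict (\<lambda>x. ?Z x \<omega>) {(k,i)}))
          borel ((\<lambda>f. snd (f (k,j))) \<circ> (\<lambda>\<omega>. restrict (\<lambda>x. ?Z x \<omega>) {(k,j)}))"
    by (rule indep_var_compose[OF r m1 m2])
  moreover have "((\<lambda>f. fst (f (k,i))) \<circ> (\<lambda>\<omega>. restrict (\<lambda>x. ?Z x \<omega>) {(k,i)})) = U k i"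
    "((\<lambda>f. snd (f (k,j))) \<circ> (\<lambda>\<omega>. restrict (\<lambda>x. ?Z x \<omega>) {(k,j)})) = V k j" by auto
  ultimately show ?thesis by simp
qed

lemma (in prob_space) distr_fst_snd:
  fixes U V :: "'a \<Rightarrow> real" and U' V' :: "'a \<Rightarrow> real"
  assumes d: "distr M borel (\<lambda>\<omega>. (U \<omega>, V \<omega>)) = distr M borel (\<lambda>\<omega>. (U' \<omega>, V' \<omega>))"
    and m: "(\<lambda>\<omega>. (U \<omega>, V \<omega>)) \<in> borel_measurable M" "(\<lambda>\<omega>. (U' \<omega>, V' \<omega>)) \<in> borel_measurable M"
  shows "distr M borel U = distr M borel U'" "distr M borel V = distr M borel V'"
proof -
  have "distr (distr M borel (\<lambda>\<omega>. (U \<omega>, V \<omega>))) borel fst = distr (distr M borel (\<lambda>\<omega>. (U' \<omega>, V' \<omega>))) borel fst"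
    using d by simp
  then show "distr M borel U = distr M borel U'"
    using m by (subst (asm) (1 2) distr_distr) (auto simp: comp_def fst_borel snd_borel)
  have "distr (distr M borel (\<lambda>\<omega>. (U \<omega>, V \<omega>))) borel snd = distr (distr M borel (\<lambda>\<omega>. (U' \<omega>, V' \<omega>))) borel snd"
    using d by simp
  then show "distr M borel V = distr M borel V'"
    using m by (subst (asm) (1 2) distr_distr) (auto simp: comp_def fst_borel snd_borel)
qed


lemma (in prob_space) ott2:
  fixes \<xi> :: "nat \<Rightarrow> 'a \<Rightarrow> real"
  assumes ind: "indep_vars (\<lambda>_. borel) \<xi> {1..}"
    and small: "\<And>m. m \<le> N \<Longrightarrow> prob {\<omega>\<in>space M. \<bar>\<Sum>k=1..m. \<xi> k \<omega>\<bar> > s/2} \<le> 1/4"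
  shows "prob {\<omega>\<in>space M. \<exists>m\<in>{1..N}. \<bar>\<Sum>k=1..m. \<xi> k \<omega>\<bar> > s + t} \<le> 2 * prob {\<omega>\<in>space M. \<bar>\<Sum>k=1..N. \<xi> k \<omega>\<bar> > t}"
proof -
  have rv: "\<And>k. k \<ge> 1 \<Longrightarrow> \<xi> k \<in> borel_measurable M" using ind by (auto simp: indep_vars_def)
  have Sm[measurable]: "(\<lambda>\<omega>. \<Sum>k=1..m. \<xi> k \<omega>) \<in> borel_measurable M" for m
    by (rule borel_measurable_sum) (use rv in auto)
  have bet: "prob {\<omega>\<in>space M. \<bar>(\<Sum>k=1..N. \<xi> k \<omega>) - (\<Sum>k=1..m. \<xi> k \<omega>)\<bar> > s} \<le> 1/2" if m: "m \<in> {1..N}" for m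
  proof -
    have "prob {\<omega>\<in>space M. \<bar>(\<Sum>k=1..N. \<xi> k \<omega>) - (\<Sum>k=1..m. \<xi> k \<omega>)\<bar> > s}
       \<le> prob ({\<omega>\<in>space M. \<bar>\<Sum>k=1..N. \<xi> k \<omega>\<bar> > s/2} \<union> {\<omega>\<in>space M. \<bar>\<Sum>k=1..m. \<xi> k \<omega>\<bar> > s/2})"
      by (rule finite_measure_mono) (force, measurable)
    also have "\<dots> \<le> prob {\<omega>\<in>space M. \<bar>\<Sum>k=1..N. \<xi> k \<omega>\<bar> > s/2} + prob {\<omega>\<in>space M. \<bar>\<Sum>k=1..m. \<xi> k \<omega>\<bar> > s/2}"
      by (rule measure_Un_le) measurable
    also have "\<dots> \<le> 1/4 + 1/4" using small[of N] small[of m] m by (intro add_mono) auto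
    finally show ?thesis by simp
  qed
  have "prob {\<omega>\<in>space M. \<exists>m\<in>{1..N}. \<bar>\<Sum>k=1..m. \<xi> k \<omega>\<bar> > s + t} * (1 - 1/2)
          \<le> prob {\<omega>\<in>space M. \<bar>\<Sum>k=1..N. \<xi> k \<omega>\<bar> > s + t - s}"
    by (rule ottaviani[OF ind bet])
  then show ?thesis by simp
qed

lemma (in prob_space) stepC:
  fixes \<xi> :: "nat \<Rightarrow> 'a \<Rightarrow> real"
  assumes ind: "indep_vars (\<lambda>_. borel) \<xi> {1..}" and Nn: "N \<le> n"
    and s1: "prob {\<omega>\<in>space M. \<bar>\<Sum>k=1..N. \<xi> k \<omega>\<bar> > y/2} \<le> 1/4"
    and s2: "prob {\<omega>\<in>space M. \<bar>\<Sum>k=1..n. \<xi> k \<omega>\<bar> > y/2} \<le> 1/4"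
  shows "prob {\<omega>\<in>space M. \<bar>\<Sum>k=1..N. \<xi> k \<omega>\<bar> > x + y} \<le> 2 * prob {\<omega>\<in>space M. \<bar>\<Sum>k=1..n. \<xi> k \<omega>\<bar> > x}"
proof -
  have rv: "\<And>k. k \<ge> 1 \<Longrightarrow> \<xi> k \<in> borel_measurable M" using ind by (auto simp: indep_vars_def)
  have Sm[measurable]: "(\<lambda>\<omega>. \<Sum>k=1..m. \<xi> k \<omega>) \<in> borel_measurable M" for m
    by (rule borel_measurable_sum) (use rv in auto)
  define SN where "SN \<omega> = (\<Sum>k=1..N. \<xi> k \<omega>)" for \<omega>
  define Sn where "Sn \<omega> = (\<Sum>k=1..n. \<xi> k \<omega>)" for \<omega>
  have [measurable]: "SN \<in> borel_measurable M" "Sn \<in> borel_measurable M" unfolding SN_def Sn_def by measurable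
  have A: "{z::real. x + y < \<bar>z\<bar>} \<in> sets borel" by measurable
  have B: "{z::real. \<bar>z\<bar> \<le> y} \<in> sets borel" by measurable
  have I: "prob {\<omega>\<in>space M. SN \<omega> \<in> {z. x + y < \<bar>z\<bar>} \<and> Sn \<omega> - SN \<omega> \<in> {z. \<bar>z\<bar> \<le> y}}
       = prob {\<omega>\<in>space M. SN \<omega> \<in> {z. x + y < \<bar>z\<bar>}} * prob {\<omega>\<in>space M. Sn \<omega> - SN \<omega> \<in> {z. \<bar>z\<bar> \<le> y}}"
    unfolding SN_def Sn_def by (rule indep_sums[OF ind Nn A B])
  have PB: "prob {\<omega>\<in>space M. Sn \<omega> - SN \<omega> \<in> {z. \<bar>z\<bar> \<le> y}} \<ge> 1/2"
  proof -
    have ev: "{\<omega>\<in>space M. Sn \<omega> - SN \<omega> \<in> {z. \<bar>z\<bar> \<le> y}} \<in> events" by measurable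
    have "space M - {\<omega>\<in>space M. Sn \<omega> - SN \<omega> \<in> {z. \<bar>z\<bar> \<le> y}} \<subseteq> {\<omega>\<in>space M. \<bar>SN \<omega>\<bar> > y/2} \<union> {\<omega>\<in>space M. \<bar>Sn \<omega>\<bar> > y/2}"
      by auto
    then have "prob (space M - {\<omega>\<in>space M. Sn \<omega> - SN \<omega> \<in> {z. \<bar>z\<bar> \<le> y}}) \<le> prob ({\<omega>\<in>space M. \<bar>SN \<omega>\<bar> > y/2} \<union> {\<omega>\<in>space M. \<bar>Sn \<omega>\<bar> > y/2})"
      by (rule finite_measure_mono) measurable
    also have "\<dots> \<le> prob {\<omega>\<in>space M. \<bar>SN \<omega>\<bar> > y/2} + prob {\<omega>\<in>space M. \<bar>Sn \<omega>\<bar> > y/2}"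
      by (rule measure_Un_le) measurable
    also have "\<dots> \<le> 1/4 + 1/4" using s1 s2 unfolding SN_def Sn_def by (intro add_mono) auto
    finally show ?thesis using prob_compl[OF ev] by simp
  qed
  have "prob {\<omega>\<in>space M. \<bar>SN \<omega>\<bar> > x + y} * (1/2) \<le> prob {\<omega>\<in>space M. SN \<omega> \<in> {z. x + y < \<bar>z\<bar>}} * prob {\<omega>\<in>space M. Sn \<omega> - SN \<omega> \<in> {z. \<bar>z\<bar> \<le> y}}"
    using mult_left_mono[OF PB measure_nonneg, of M "{\<omega>\<in>space M. x + y < \<bar>SN \<omega>\<bar>}"] by (simp add: mult.commute)
  also have "\<dots> = prob {\<omega>\<in>space M. SN \<omega> \<in> {z. x + y < \<bar>z\<bar>} \<and> Sn \<omega> - SN \<omega> \<in> {z. \<bar>z\<bar> \<le> y}}"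
    using I by simp
  also have "\<dots> \<le> prob {\<omega>\<in>space M. \<bar>Sn \<omega>\<bar> > x}"
    by (rule finite_measure_mono) (force, measurable)
  finally show ?thesis unfolding SN_def Sn_def by simp
qed

lemma (in prob_space) tail_small:
  fixes Z :: "'a \<Rightarrow> real"
  assumes Z[measurable]: "Z \<in> borel_measurable M" and eta: "\<eta> > 0"
  shows "\<exists>x0. \<forall>x\<ge>x0. prob {\<omega>\<in>space M. \<bar>Z \<omega>\<bar> > x} \<le> \<eta>"
proof -
  define A where "A n = {\<omega>\<in>space M. \<bar>Z \<omega>\<bar> > real n}" for n :: nat
  have "range A \<subseteq> events" unfolding A_def by auto
  moreover have "decseq A" unfolding A_def decseq_def by auto
  ultimately have "(\<lambda>n. prob (A n)) \<longlonglongrightarrow> prob (\<Inter>n. A n)" by (rule finite_Lim_measure_decseq)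
  moreover have "(\<Inter>n. A n) = {}"
  proof -
    have "\<omega> \<notin> A (nat \<lceil>\<bar>Z \<omega>\<bar>\<rceil>)" for \<omega> unfolding A_def by (auto simp: not_less)
    then show ?thesis by blast
  qed
  ultimately have "(\<lambda>n. prob (A n)) \<longlonglongrightarrow> 0" by simp
  then obtain n0 where "\<forall>n\<ge>n0. prob (A n) < \<eta>"
    using eta by (auto simp: lim_sequentially dist_real_def)
  then have h: "prob (A n0) \<le> \<eta>" by auto
  show ?thesis
  proof (intro exI allI impI)
    fix x assume "real n0 \<le> x"
    then have "prob {\<omega>\<in>space M. \<bar>Z \<omega>\<bar> > x} \<le> prob (A n0)" unfolding A_def
      by (intro finite_measure_mono) auto
    then show "prob {\<omega>\<in>space M. \<bar>Z \<omega>\<bar> > x} \<le> \<eta>" using h by simp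
  qed
qed


fun nbs :: "nat \<Rightarrow> nat \<Rightarrow> nat" where
  "nbs q 0 = q"
| "nbs q (Suc k) = nbs q k + nbs q k div q"

lemma nbs_ge: "q \<ge> 1 \<Longrightarrow> nbs q k \<ge> q + k"
proof (induction k)
  case (Suc k)
  then have "0 < nbs q k div q" by (auto simp: div_greater_zero_iff)
  then show ?case using Suc by simp
qed simp

lemma nbs_Suc_gt: "q \<ge> 1 \<Longrightarrow> nbs q k < nbs q (Suc k)"
proof -
  assume q: "q \<ge> 1"
  have "q \<le> nbs q k" using nbs_ge[OF q, of k] by simp
  then have "0 < nbs q k div q" using q by (simp add: div_greater_zero_iff)
  then show ?thesis by simp
qed

lemma nbs_mono:
  assumes q: "q \<ge> 1" and kl: "k \<le> l" shows "nbs q k \<le> nbs q l"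
  using kl
proof (induction rule: dec_induct)
  case (step n)
  then show ?case using nbs_Suc_gt[OF q, of n] by linarith
qed simp

lemma nbs_Suc_le: "q \<ge> 1 \<Longrightarrow> real (nbs q (Suc k)) \<le> (1 + 1 / real q) * real (nbs q k)"
proof -
  assume q: "q \<ge> 1"
  have "(nbs q k div q) * q \<le> nbs q k" by (rule div_times_less_eq_dividend)
  then have "real (nbs q k div q) * real q \<le> real (nbs q k)" by (metis of_nat_le_iff of_nat_mult)
  then have "real (nbs q k div q) \<le> real (nbs q k) / real q" using q by (simp add: field_simps)
  then show ?thesis by (simp add: algebra_simps)
qed

lemma nbs_Suc2_le: "q \<ge> 1 \<Longrightarrow> real (nbs q (Suc (Suc k))) \<le> (1 + 3 / real q) * real (nbs q k)"
proof -
  assume q: "q \<ge> 1"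
  have "real (nbs q (Suc (Suc k))) \<le> (1 + 1 / real q) * ((1 + 1 / real q) * real (nbs q k))"
    using nbs_Suc_le[OF q, of "Suc k"] nbs_Suc_le[OF q, of k]
    by (meson order.trans less_eq_real_def mult_left_mono add_nonneg_nonneg zero_le_one divide_nonneg_nonneg of_nat_0_le_iff)
  also have "\<dots> = (1 + 2 / real q + 1 / (real q)^2) * real (nbs q k)"
    using q by (simp add: field_simps power2_eq_square)
  also have "\<dots> \<le> (1 + 3 / real q) * real (nbs q k)"
  proof -
    have "1 / (real q)^2 \<le> 1 / real q" using q by (simp add: divide_simps power2_eq_square)
    then show ?thesis by (intro mult_right_mono) auto
  qed
  finally show ?thesis .
qed

lemma nbs_gap: "q \<ge> 1 \<Longrightarrow> nbs q (Suc k) \<le> 4 * q * (nbs q (Suc k) - nbs q k)"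
proof -
  assume q: "q \<ge> 1"
  define x where "x = nbs q k"
  define d where "d = x div q"
  have "q \<le> x" using nbs_ge[OF q, of k] unfolding x_def by simp
  then have "0 < d" using q unfolding d_def by (simp add: div_greater_zero_iff)
  then have d1: "d \<ge> 1" by simp
  have "x = q * d + x mod q" unfolding d_def by simp
  moreover have "x mod q < q" using q by simp
  ultimately have "x < q * d + q" by linarith
  also have "\<dots> \<le> 2 * q * d" using d1 by (simp add: algebra_simps)
  finally have h: "x < 2 * (q * d)" by (simp add: mult.assoc)
  have "d \<le> q * d" using q by simp
  then have "x + d \<le> 4 * (q * d)" using h by linarith
  then have "x + d \<le> 4 * q * d" by (simp add: mult.assoc)
  then show ?thesis unfolding x_def d_def by simp
qed

lemma Tstat_le:
  assumes "X \<ge> 0"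
    and "\<And>i j. 1 \<le> i \<Longrightarrow> i \<le> p n \<Longrightarrow> 1 \<le> j \<Longrightarrow> j \<le> p n \<Longrightarrow> i \<noteq> j \<Longrightarrow> \<bar>\<Sum>k=1..n. U k i \<omega> * V k j \<omega>\<bar> \<le> X"
  shows "Tstat U V p n \<omega> \<le> X"
proof -
  have fin: "finite {\<bar>\<Sum>k=1..n. U k i \<omega> * V k j \<omega>\<bar> | i j. 1 \<le> i \<and> i \<le> p n \<and> 1 \<le> j \<and> j \<le> p n \<and> i \<noteq> j}"
  proof (rule finite_subset[of _ "(\<lambda>(i,j). \<bar>\<Sum>k=1..n. U k i \<omega> * V k j \<omega>\<bar>) ` ({1..p n} \<times> {1..p n})"])
  qed auto
  show ?thesis unfolding Tstat_def using assms fin by (subst Max_le_iff) auto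
qed


theorem theorem3p1:
  fixes M :: "'a measure"
    and U V :: "nat \<Rightarrow> nat \<Rightarrow> 'a \<Rightarrow> real"
    and Y :: "nat \<Rightarrow> 'a \<Rightarrow> real"
    and p :: "nat \<Rightarrow> nat"
    and a :: "nat \<Rightarrow> real"
    and lam :: real
  assumes "prob_space M"
    and UV_indep: "prob_space.indep_vars M (\<lambda>_. borel)
                     (\<lambda>(k, i) \<omega>. (U k i \<omega>, V k i \<omega>)) ({1..} \<times> {1..})"
    and UV_ident: "\<And>k i. k \<ge> 1 \<Longrightarrow> i \<ge> 1 \<Longrightarrow>
         distr M borel (\<lambda>\<omega>. (U k i \<omega>, V k i \<omega>)) = distr M borel (\<lambda>\<omega>. (U 1 1 \<omega>, V 1 1 \<omega>))"
    and p_pos: "\<And>n. n \<ge> 1 \<Longrightarrow> p n \<ge> 1"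
    and p_mono: "\<And>n. n \<ge> 1 \<Longrightarrow> p n \<le> p (Suc n)"
    and Y_indep: "prob_space.indep_vars M (\<lambda>_. borel) Y {1..}"
    and Y_ident: "\<And>n. n \<ge> 1 \<Longrightarrow>
         distr M borel (Y n) = distr M borel (\<lambda>\<omega>. U 1 1 \<omega> * V 1 2 \<omega>)"
    and a_pos: "\<And>n. n \<ge> 1 \<Longrightarrow> a n > 0"
    and a_mono: "\<And>n. n \<ge> 1 \<Longrightarrow> a n \<le> a (Suc n)"
    and a_inf: "filterlim a at_top sequentially"
    and a_reg: "((\<lambda>c. limsup (\<lambda>n. ereal (a (nat \<lfloor>c * real n\<rfloor>) / a n))) \<longlongrightarrow> ereal 1)
                  (at_right 1)"
    and S_prob: "\<And>\<epsilon>. \<epsilon> > 0 \<Longrightarrow>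
         (\<lambda>n. measure M {\<omega> \<in> space M. \<bar>(\<Sum>k=1..n. Y k \<omega>) / a n\<bar> > \<epsilon>}) \<longlonglongrightarrow> 0"
    and lam_pos: "0 < lam"
    and series: "summable (\<lambda>n. real (p (Suc n))^2 / real (Suc n) *
         measure M {\<omega> \<in> space M. \<bar>\<Sum>k=1..Suc n. Y k \<omega>\<bar> / a (Suc n) > lam})"
  shows "AE \<omega> in M. limsup (\<lambda>n. ereal (Tstat U V p n \<omega> / a n)) \<le> ereal lam"
proof -
  interpret prob_space M by fact
  have Zrv: "(\<lambda>\<omega>. (U k i \<omega>, V k i \<omega>)) \<in> borel_measurable M" if "k \<ge> 1" "i \<ge> 1" for k i
  proof -
    have "(k, i) \<in> {1..} \<times> {1..}" using that by auto
    then show ?thesis using UV_indep unfolding indep_vars_def by fastforce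
  qed
  have Yrv: "Y k \<in> borel_measurable M" if "k \<ge> 1" for k
    using Y_indep that unfolding indep_vars_def by auto
  define S where "S m \<omega> = (\<Sum>k=1..m. Y k \<omega>)" for m \<omega>
  define P where "P m x = prob {\<omega>\<in>space M. \<bar>S m \<omega>\<bar> > x}" for m x
  have Smeas[measurable]: "S m \<in> borel_measurable M" for m
    unfolding S_def by (rule borel_measurable_sum) (use Yrv in auto)
  have Pnn: "0 \<le> P m x" for m x by (simp add: P_def)
  have Panti: "P m y \<le> P m x" if "x \<le> y" for m x y
    unfolding P_def by (rule finite_measure_mono) (use that in force, measurable)
  have XP: "prob {\<omega>\<in>space M. \<bar>\<Sum>k=1..m. U k i \<omega> * V k j \<omega>\<bar> > x} = P m x"
    if ij: "i \<ge> 1" "j \<ge> 1" "i \<noteq> j" for i j m x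
  proof -
    have dU: "distr M borel (U k i) = distr M borel (U 1 1)" if "k \<ge> 1" "i \<ge> 1" for k i
      using distr_fst_snd(1)[OF UV_ident[OF that] Zrv[OF that] Zrv[of 1 1]] by simp
    have dV: "distr M borel (V k i) = distr M borel (V 1 1)" if "k \<ge> 1" "i \<ge> 1" for k i
      using distr_fst_snd(2)[OF UV_ident[OF that] Zrv[OF that] Zrv[of 1 1]] by simp
    have fm: "(\<lambda>(x::real, y::real). x * y) \<in> borel_measurable (borel \<Otimes>\<^sub>M borel)" by measurable
    have d2: "distr M borel (\<lambda>\<omega>. U k i \<omega> * V k j \<omega>) = distr M borel (Y k)" if k: "k \<ge> 1" for k
    proof -
      have "distr M borel (\<lambda>\<omega>. U k i \<omega> * V k j \<omega>) = distr M borel (\<lambda>\<omega>. U 1 1 \<omega> * V 1 2 \<omega>)"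
        by (rule distr_indep_op[where f="(*)", OF UV_indep_var[OF UV_indep k ij] UV_indep_var[OF UV_indep, of 1 1 2] _ _ fm])
          (use dU[OF k ij(1)] dV[OF k ij(2)] dV[of 1 2] in auto)
      then show ?thesis using Y_ident[OF k] by simp
    qed
    have "distr M borel (\<lambda>\<omega>. \<Sum>k=1..m. U k i \<omega> * V k j \<omega>) = distr M borel (\<lambda>\<omega>. \<Sum>k=1..m. Y k \<omega>)"
      by (rule distr_sum_eq[OF xi_indep[OF UV_indep ij] Y_indep d2])
    then have "measure (distr M borel (\<lambda>\<omega>. \<Sum>k=1..m. U k i \<omega> * V k j \<omega>)) {z. \<bar>z\<bar> > x}
             = measure (distr M borel (\<lambda>\<omega>. \<Sum>k=1..m. Y k \<omega>)) {z. \<bar>z\<bar> > x}" by simp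
    moreover have "(\<lambda>\<omega>. \<Sum>k=1..m. U k i \<omega> * V k j \<omega>) \<in> borel_measurable M"
      using indep_vars_def xi_indep[OF UV_indep ij]
      by (intro borel_measurable_sum) (auto simp: indep_vars_def)
    moreover have "(\<lambda>\<omega>. \<Sum>k=1..m. Y k \<omega>) \<in> borel_measurable M" using Smeas[of m] unfolding S_def .
    moreover have "{z::real. \<bar>z\<bar> > x} \<in> sets borel" by measurable
    ultimately have "prob ((\<lambda>\<omega>. \<Sum>k=1..m. U k i \<omega> * V k j \<omega>) -` {z. \<bar>z\<bar> > x} \<inter> space M)
       = prob ((\<lambda>\<omega>. \<Sum>k=1..m. Y k \<omega>) -` {z. \<bar>z\<bar> > x} \<inter> space M)"
      by (simp add: measure_distr)
    moreover have "(\<lambda>\<omega>. \<Sum>k=1..m. U k i \<omega> * V k j \<omega>) -` {z. \<bar>z\<bar> > x} \<inter> space M = {\<omega>\<in>space M. \<bar>\<Sum>k=1..m. U k i \<omega> * V k j \<omega>\<bar> > x}"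
      "(\<lambda>\<omega>. \<Sum>k=1..m. Y k \<omega>) -` {z. \<bar>z\<bar> > x} \<inter> space M = {\<omega>\<in>space M. \<bar>S m \<omega>\<bar> > x}"
      unfolding S_def by auto
    ultimately show ?thesis unfolding P_def by simp
  qed
  have apos: "a n > 0" if "n \<ge> 1" for n using a_pos that by simp
  have amono: "a m \<le> a n" if "1 \<le> m" "m \<le> n" for m n
    using that(2,1)
  proof (induction n rule: dec_induct)
    case (step na)
    then show ?case using a_mono[of na] by linarith
  qed simp
  have pmono: "p m \<le> p n" if "1 \<le> m" "m \<le> n" for m n
    using that(2,1)
  proof (induction n rule: dec_induct)
    case (step na)
    then show ?case using p_mono[of na] by linarith
  qed simp
  have conv: "\<exists>M0. \<forall>n\<ge>M0. P n (\<epsilon> * a n) \<le> \<eta>" if "\<epsilon> > 0" "\<eta> > 0" for \<epsilon> \<eta>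
  proof -
    have "eventually (\<lambda>n. measure M {\<omega> \<in> space M. \<bar>(\<Sum>k=1..n. Y k \<omega>) / a n\<bar> > \<epsilon>} < \<eta>) sequentially"
      by (rule order_tendstoD(2)[OF S_prob[OF that(1)] that(2)])
    then obtain N where N: "\<forall>n\<ge>N. measure M {\<omega> \<in> space M. \<bar>(\<Sum>k=1..n. Y k \<omega>) / a n\<bar> > \<epsilon>} < \<eta>"
      by (auto simp: eventually_sequentially)
    show ?thesis
    proof (intro exI allI impI)
      fix n assume n: "max 1 N \<le> n"
      then have an: "a n > 0" using apos by simp
      have "{\<omega> \<in> space M. \<bar>(\<Sum>k=1..n. Y k \<omega>) / a n\<bar> > \<epsilon>} = {\<omega>\<in>space M. \<bar>S n \<omega>\<bar> > \<epsilon> * a n}"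
        using an by (auto simp: S_def abs_divide pos_less_divide_eq)
      moreover have "n \<ge> N" using n by simp
      ultimately show "P n (\<epsilon> * a n) \<le> \<eta>" using N[rule_format, of n] unfolding P_def by simp
    qed
  qed
  have stepA: "\<exists>N0. \<forall>N\<ge>N0. \<forall>m\<le>N. P m (\<epsilon> * a N) \<le> \<eta>" if e: "\<epsilon> > 0" "\<eta> > 0" for \<epsilon> \<eta>
  proof -
    obtain M0 where M0: "\<forall>n\<ge>M0. P n (\<epsilon> * a n) \<le> \<eta>" using conv[OF e] by blast
    have "\<forall>m\<in>{..<max 1 M0}. eventually (\<lambda>N. P m (\<epsilon> * a N) \<le> \<eta>) sequentially"
    proof
      fix m
      obtain x0 where x0: "\<forall>x\<ge>x0. P m x \<le> \<eta>"
        using tail_small[OF Smeas e(2)] unfolding P_def by blast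
      have "eventually (\<lambda>N. a N \<ge> x0 / \<epsilon>) sequentially"
        using a_inf by (simp add: filterlim_at_top)
      then show "eventually (\<lambda>N. P m (\<epsilon> * a N) \<le> \<eta>) sequentially"
        by eventually_elim (use x0 e in \<open>auto simp: pos_divide_le_eq mult.commute\<close>)
    qed
    then have "eventually (\<lambda>N. \<forall>m\<in>{..<max 1 M0}. P m (\<epsilon> * a N) \<le> \<eta>) sequentially"
      by (rule eventually_ball_finite[rotated]) simp
    then obtain N1 where N1: "\<forall>N\<ge>N1. \<forall>m\<in>{..<max 1 M0}. P m (\<epsilon> * a N) \<le> \<eta>"
      by (auto simp: eventually_sequentially)
    show ?thesis
    proof (intro exI allI impI)
      fix N m assume N: "max N1 (max 1 M0) \<le> N" and m: "m \<le> N"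
      show "P m (\<epsilon> * a N) \<le> \<eta>"
      proof (cases "m < max 1 M0")
        case True then show ?thesis using N1 N by auto
      next
        case False
        then have "m \<ge> 1" "m \<ge> M0" by auto
        then have "\<epsilon> * a m \<le> \<epsilon> * a N" using amono[of m N] m e by simp
        then show ?thesis using Panti M0 \<open>m \<ge> M0\<close> by (meson order.trans)
      qed
    qed
  qed
  have main: "AE \<omega> in M. limsup (\<lambda>n. ereal (Tstat U V p n \<omega> / a n)) \<le> ereal (lam * (1 + 3 * \<delta>))"
    if \<delta>: "\<delta> > 0" for \<delta>
  proof -
    have "eventually (\<lambda>c. limsup (\<lambda>n. ereal (a (nat \<lfloor>c * real n\<rfloor>) / a n)) < ereal (1 + \<delta>)) (at_right 1)"
      by (rule order_tendstoD(2)[OF a_reg]) (use \<delta> in simp)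
    then obtain b where b: "b > 1" and hb: "\<And>y. y > 1 \<Longrightarrow> y < b \<Longrightarrow> limsup (\<lambda>n. ereal (a (nat \<lfloor>y * real n\<rfloor>) / a n)) < ereal (1 + \<delta>)"
      by (auto simp: eventually_at_right_field)
    define c' where "c' = (1 + b) / 2"
    have c'1: "c' > 1" and "c' < b" using b unfolding c'_def by auto
    then have "limsup (\<lambda>n. ereal (a (nat \<lfloor>c' * real n\<rfloor>) / a n)) < ereal (1 + \<delta>)" using hb by simp
    then have "eventually (\<lambda>n. ereal (a (nat \<lfloor>c' * real n\<rfloor>) / a n) < ereal (1 + \<delta>)) sequentially"
      by (rule Limsup_lessD)
    then obtain n1 where n1: "\<And>n. n \<ge> n1 \<Longrightarrow> a (nat \<lfloor>c' * real n\<rfloor>) / a n < 1 + \<delta>"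
      by (auto simp: eventually_sequentially)
    have n1': "a (nat \<lfloor>c' * real n\<rfloor>) \<le> (1 + \<delta>) * a n" if "n \<ge> max 1 n1" for n
    proof -
      have "a n > 0" using apos that by simp
      then show ?thesis using n1[of n] that by (simp add: pos_divide_less_eq)
    qed
    define q where "q = nat \<lceil>3 / (c' - 1)\<rceil>"
    have "0 < \<lceil>3 / (c' - 1)\<rceil>" using c'1 by simp
    then have q1: "q \<ge> 1" unfolding q_def by linarith
    have q3: "1 + 3 / real q \<le> c'"
    proof -
      have "real q \<ge> 3 / (c' - 1)" unfolding q_def by linarith
      then have "3 / real q \<le> c' - 1" using c'1 q1 by (simp add: field_simps)
      then show ?thesis by simp
    qed
    define nb where "nb k = nbs q k" for k
    have nb_ge: "nb k \<ge> q + k" for k unfolding nb_def by (rule nbs_ge[OF q1])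
    have nb_mono: "nb k \<le> nb l" if "k \<le> l" for k l unfolding nb_def by (rule nbs_mono[OF q1 that])
    have nb_lt: "nb k < nb (Suc k)" for k unfolding nb_def by (rule nbs_Suc_gt[OF q1])
    have nb_gap: "nb (Suc k) \<le> 4 * q * (nb (Suc k) - nb k)" for k unfolding nb_def by (rule nbs_gap[OF q1])
    have anext: "a (nb (Suc (Suc k))) \<le> (1 + \<delta>) * a (nb k)" if "k \<ge> n1" for k
    proof -
      have "real (nb (Suc (Suc k))) \<le> (1 + 3 / real q) * real (nb k)" unfolding nb_def by (rule nbs_Suc2_le[OF q1])
      also have "\<dots> \<le> c' * real (nb k)" using q3 by (intro mult_right_mono) auto
      finally have "nb (Suc (Suc k)) \<le> nat \<lfloor>c' * real (nb k)\<rfloor>" by (simp add: le_nat_floor)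
      then have "a (nb (Suc (Suc k))) \<le> a (nat \<lfloor>c' * real (nb k)\<rfloor>)"
        using amono nb_ge[of "Suc (Suc k)"] q1 by simp
      also have "\<dots> \<le> (1 + \<delta>) * a (nb k)" using n1' nb_ge[of k] that q1 by simp
      finally show ?thesis .
    qed
    define \<epsilon>' where "\<epsilon>' = lam * \<delta> / (2 * (1 + \<delta>))"
    have \<epsilon>'pos: "\<epsilon>' > 0" unfolding \<epsilon>'_def using lam_pos \<delta> by simp
    obtain N0 where N0: "\<And>N m. N \<ge> N0 \<Longrightarrow> m \<le> N \<Longrightarrow> P m (\<epsilon>' * a N) \<le> 1/4"
      using stepA[OF \<epsilon>'pos, of "1/4"] by auto
    define K0 where "K0 = max n1 N0"
    define thr where "thr k = lam * (1 + 3 * \<delta>) * a (nb k)" for k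
    define E where "E k = {\<omega>\<in>space M. \<exists>i\<in>{1..p (nb (Suc k))}. \<exists>j\<in>{1..p (nb (Suc k))}. i \<noteq> j \<and>
                (\<exists>m\<in>{1..nb (Suc k)}. \<bar>\<Sum>l=1..m. U l i \<omega> * V l j \<omega>\<bar> > thr k)}" for k
    define E' where "E' k = (if k \<ge> K0 then E k else {})" for k
    define g where "g n = real (p n)^2 / real n * P n (lam * a n)" for n
    have gnn: "g n \<ge> 0" for n unfolding g_def using Pnn by simp
    have g_summ: "summable (\<lambda>n. g (Suc n))"
    proof -
      have "g (Suc n) = real (p (Suc n))^2 / real (Suc n) *
         measure M {\<omega> \<in> space M. \<bar>\<Sum>k=1..Suc n. Y k \<omega>\<bar> / a (Suc n) > lam}" for n
      proof -
        have "a (Suc n) > 0" using apos by simp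
        then have "{\<omega> \<in> space M. \<bar>\<Sum>k=1..Suc n. Y k \<omega>\<bar> / a (Suc n) > lam} = {\<omega>\<in>space M. \<bar>S (Suc n) \<omega>\<bar> > lam * a (Suc n)}"
          by (auto simp: S_def pos_less_divide_eq)
        then show ?thesis unfolding g_def P_def by simp
      qed
      then show ?thesis using series by simp
    qed
    have Emeas: "E k \<in> events" for k
    proof -
      have [measurable]: "(\<lambda>\<omega>. \<Sum>l=1..m. U l i \<omega> * V l j \<omega>) \<in> borel_measurable M" if "i \<ge> 1" "j \<ge> 1" for m i j
      proof (rule borel_measurable_sum)
        fix l assume "l \<in> {1..m}"
        then show "(\<lambda>\<omega>. U l i \<omega> * V l j \<omega>) \<in> borel_measurable M"
          using comp_fst_borel[OF Zrv[of l i]] comp_snd_borel[OF Zrv[of l j]] that by auto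
      qed
      show ?thesis unfolding E_def by measurable
    qed
    have Ebound: "prob (E k) \<le> 16 * real q * (\<Sum>n\<in>{nb (Suc k)<..nb (Suc (Suc k))}. g n)" if k: "k \<ge> K0" for k
    proof -
      define N where "N = nb (Suc k)"
      define nx where "nx = nb (Suc (Suc k))"
      define A where "A = a (nb k)"
      have N1: "N \<ge> 1" unfolding N_def using nb_ge[of "Suc k"] by simp
      have NA: "N < nx" unfolding N_def nx_def by (rule nb_lt)
      have Apos: "A > 0" unfolding A_def using apos nb_ge[of k] q1 by simp
      have hA: "a nx \<le> (1 + \<delta>) * A" unfolding nx_def A_def using anext k unfolding K0_def by simp
      have nxN0: "nx \<ge> N0" unfolding nx_def using nb_ge[of "Suc (Suc k)"] k unfolding K0_def by simp
      have small: "P m (lam * \<delta> * A / 2) \<le> 1/4" if "m \<le> nx" for m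
      proof -
        have "\<epsilon>' * a nx \<le> \<epsilon>' * ((1 + \<delta>) * A)" using hA \<epsilon>'pos by simp
        also have "\<dots> = lam * \<delta> * A / 2" unfolding \<epsilon>'_def using \<delta> by (simp add: field_simps)
        finally have "P m (lam * \<delta> * A / 2) \<le> P m (\<epsilon>' * a nx)" by (rule Panti)
        also have "\<dots> \<le> 1/4" using N0[OF nxN0 that] .
        finally show ?thesis .
      qed
      define t where "t = lam * (1 + 2 * \<delta>) * A"
      have pair: "prob {\<omega>\<in>space M. \<exists>m\<in>{1..N}. \<bar>\<Sum>l=1..m. U l i \<omega> * V l j \<omega>\<bar> > thr k} \<le> 2 * P N t"
        if ij: "i \<ge> 1" "j \<ge> 1" "i \<noteq> j" for i j
      proof -
        have "prob {\<omega>\<in>space M. \<exists>m\<in>{1..N}. \<bar>\<Sum>l=1..m. U l i \<omega> * V l j \<omega>\<bar> > lam * \<delta> * A + t}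
            \<le> 2 * prob {\<omega>\<in>space M. \<bar>\<Sum>l=1..N. U l i \<omega> * V l j \<omega>\<bar> > t}"
        proof (rule ott2[OF xi_indep[OF UV_indep ij]])
          fix m assume "m \<le> N"
          have "prob {\<omega>\<in>space M. \<bar>\<Sum>k=1..m. U k i \<omega> * V k j \<omega>\<bar> > lam * \<delta> * A / 2} = P m (lam * \<delta> * A / 2)"
            by (rule XP[OF ij])
          also have "\<dots> \<le> 1/4" using small \<open>m \<le> N\<close> NA by simp
          finally show "prob {\<omega>\<in>space M. \<bar>\<Sum>k=1..m. U k i \<omega> * V k j \<omega>\<bar> > lam * \<delta> * A / 2} \<le> 1/4" .
        qed
        moreover have "lam * \<delta> * A + t = thr k" unfolding t_def thr_def A_def by (simp add: algebra_simps)
        ultimately show ?thesis using XP[OF ij] by simp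
      qed
      define Q where "Q = {(i,j). i \<in> {1..p N} \<and> j \<in> {1..p N} \<and> i \<noteq> j}"
      define F where "F ij = {\<omega>\<in>space M. \<exists>m\<in>{1..N}. \<bar>\<Sum>l=1..m. U l (fst ij) \<omega> * V l (snd ij) \<omega>\<bar> > thr k}" for ij
      have QF: "Q \<subseteq> {1..p N} \<times> {1..p N}" unfolding Q_def by auto
      have finQ: "finite Q" using QF finite_subset by blast
      have cardQ: "real (card Q) \<le> real (p N)^2"
      proof -
        have "card Q \<le> card ({1..p N} \<times> {1..p N})" by (rule card_mono) (use QF in auto)
        then have "card Q \<le> p N ^ 2" by (simp add: power2_eq_square)
        then show ?thesis by (metis of_nat_le_iff of_nat_power)
      qed
      have EQ: "E k = (\<Union>ij\<in>Q. F ij)"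
      proof (intro equalityI subsetI)
        fix \<omega> assume "\<omega> \<in> E k"
        then obtain i j m where w: "\<omega> \<in> space M" "i\<in>{1..p N}" "j\<in>{1..p N}" "i\<noteq>j" "m\<in>{1..N}"
            "\<bar>\<Sum>l=1..m. U l i \<omega> * V l j \<omega>\<bar> > thr k" unfolding E_def N_def by blast
        have "(i,j) \<in> Q" using w unfolding Q_def by simp
        moreover have "\<omega> \<in> F (i,j)" using w unfolding F_def by auto
        ultimately show "\<omega> \<in> (\<Union>ij\<in>Q. F ij)" by blast
      next
        fix \<omega> assume "\<omega> \<in> (\<Union>ij\<in>Q. F ij)"
        then obtain i j where w: "(i,j) \<in> Q" "\<omega> \<in> F (i,j)" by auto
        then obtain m where m: "\<omega>\<in>space M" "m\<in>{1..N}" "\<bar>\<Sum>l=1..m. U l i \<omega> * V l j \<omega>\<bar> > thr k"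
          unfolding F_def by auto
        have ij: "i\<in>{1..p N}" "j\<in>{1..p N}" "i\<noteq>j" using w(1) unfolding Q_def by auto
        have "\<exists>i\<in>{1..p N}. \<exists>j\<in>{1..p N}. i \<noteq> j \<and> (\<exists>m\<in>{1..N}. \<bar>\<Sum>l=1..m. U l i \<omega> * V l j \<omega>\<bar> > thr k)"
          using m ij by blast
        then show "\<omega> \<in> E k" using m(1) unfolding E_def N_def by simp
      qed
      have Fmeas: "F ij \<in> events" if ijQ: "ij \<in> Q" for ij
      proof -
        obtain i j where ij: "ij = (i,j)" "i \<ge> 1" "j \<ge> 1" using ijQ unfolding Q_def by auto
        have [measurable]: "(\<lambda>\<omega>. \<Sum>l=1..m. U l i \<omega> * V l j \<omega>) \<in> borel_measurable M" for m
        proof (rule borel_measurable_sum)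
          fix l assume "l \<in> {1..m}"
          then show "(\<lambda>\<omega>. U l i \<omega> * V l j \<omega>) \<in> borel_measurable M"
            using comp_fst_borel[OF Zrv[of l i]] comp_snd_borel[OF Zrv[of l j]] ij by auto
        qed
        show ?thesis unfolding F_def ij(1) fst_conv snd_conv by measurable
      qed
      have "prob (E k) \<le> (\<Sum>ij\<in>Q. prob (F ij))"
        unfolding EQ by (rule measure_subadditive_finite) (use finQ Fmeas in auto)
      also have "\<dots> \<le> (\<Sum>ij\<in>Q. 2 * P N t)"
      proof (rule sum_mono)
        fix ij assume "ij \<in> Q"
        then obtain i j where "ij = (i,j)" "i \<ge> 1" "j \<ge> 1" "i \<noteq> j" unfolding Q_def by auto
        then show "prob (F ij) \<le> 2 * P N t" using pair[of i j] unfolding F_def by simp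
      qed
      also have "\<dots> = real (card Q) * (2 * P N t)" by simp
      also have "\<dots> \<le> real (p N)^2 * (2 * P N t)" using cardQ Pnn by (intro mult_right_mono) auto
      finally have EkN: "prob (E k) \<le> real (p N)^2 * (2 * P N t)" .
      have stepn: "prob (E k) \<le> 4 * real nx * g n" if n: "n \<in> {N<..nx}" for n
      proof -
        have n1: "n \<ge> 1" "N \<le> n" "n \<le> nx" using n N1 by auto
        have "P N (lam * (1 + \<delta>) * A + lam * \<delta> * A) \<le> 2 * P n (lam * (1 + \<delta>) * A)"
          unfolding P_def S_def
          by (rule stepC[OF Y_indep n1(2)]) (use small[of N] small[of n] NA n1 in \<open>auto simp: P_def S_def\<close>)
        moreover have "lam * (1 + \<delta>) * A + lam * \<delta> * A = t" unfolding t_def by (simp add: algebra_simps)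
        moreover have "P n (lam * (1 + \<delta>) * A) \<le> P n (lam * a n)"
        proof (rule Panti)
          have "a n \<le> a nx" using amono n1 by simp
          then show "lam * a n \<le> lam * (1 + \<delta>) * A" using hA lam_pos by (simp add: mult.assoc)
        qed
        ultimately have PNt: "P N t \<le> 2 * P n (lam * a n)" by simp
        have "p N \<le> p n" using pmono N1 n1 by simp
        then have pp: "real (p N)^2 \<le> real (p n)^2" by (simp add: power_mono)
        have "prob (E k) \<le> real (p N)^2 * (2 * P N t)" by (rule EkN)
        also have "\<dots> \<le> real (p n)^2 * (4 * P n (lam * a n))"
        proof -
          have "2 * P N t \<le> 4 * P n (lam * a n)" using PNt by simp
          then show ?thesis using pp Pnn by (rule_tac mult_mono) auto
        qed
        also have "\<dots> = 4 * real n * g n" unfolding g_def using n1 by (simp add: field_simps)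
        also have "\<dots> \<le> 4 * real nx * g n" using n1 gnn by (intro mult_right_mono) auto
        finally show ?thesis .
      qed
      have "real (nx - N) * prob (E k) = (\<Sum>n\<in>{N<..nx}. prob (E k))" by simp
      also have "\<dots> \<le> (\<Sum>n\<in>{N<..nx}. 4 * real nx * g n)" by (rule sum_mono) (rule stepn)
      also have "\<dots> = 4 * real nx * (\<Sum>n\<in>{N<..nx}. g n)" by (simp add: sum_distrib_left)
      finally have h1: "real (nx - N) * prob (E k) \<le> 4 * real nx * (\<Sum>n\<in>{N<..nx}. g n)" .
      have gap: "real nx \<le> 4 * real q * real (nx - N)"
        using nb_gap[of "Suc k"] unfolding nx_def N_def by (metis of_nat_le_iff of_nat_mult of_nat_numeral)
      have nxpos: "real nx > 0" using NA by simp
      have "real nx * prob (E k) \<le> 4 * real q * (real (nx - N) * prob (E k))"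
        using mult_right_mono[OF gap measure_nonneg, of M "E k"] by (simp add: mult.assoc)
      also have "\<dots> \<le> 4 * real q * (4 * real nx * (\<Sum>n\<in>{N<..nx}. g n))"
        using h1 by (intro mult_left_mono) auto
      also have "\<dots> = real nx * (16 * real q * (\<Sum>n\<in>{N<..nx}. g n))" by (simp add: algebra_simps)
      finally have "real nx * prob (E k) \<le> real nx * (16 * real q * (\<Sum>n\<in>{N<..nx}. g n))" .
      then show ?thesis using nxpos unfolding N_def nx_def by simp
    qed
    define h where "h k = 16 * real q * (\<Sum>n\<in>{nb (Suc k)<..nb (Suc (Suc k))}. g n)" for k
    have hnn: "h k \<ge> 0" for k unfolding h_def using gnn by (simp add: sum_nonneg)
    have hsum: "(\<Sum>k<K. (\<Sum>n\<in>{nb (Suc k)<..nb (Suc (Suc k))}. g n)) = (\<Sum>n\<in>{nb 1<..nb (Suc K)}. g n)" for K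
    proof (induction K)
      case (Suc K)
      have "{nb 1<..nb (Suc (Suc K))} = {nb 1<..nb (Suc K)} \<union> {nb (Suc K)<..nb (Suc (Suc K))}"
        using nb_mono[of 1 "Suc K"] nb_lt[of "Suc K"] by auto
      then have "(\<Sum>n\<in>{nb 1<..nb (Suc (Suc K))}. g n) = (\<Sum>n\<in>{nb 1<..nb (Suc K)}. g n) + (\<Sum>n\<in>{nb (Suc K)<..nb (Suc (Suc K))}. g n)"
        by (simp add: sum.union_disjoint[symmetric])
      then show ?case using Suc by simp
    qed simp
    have h_summ: "summable h"
    proof (rule bounded_imp_summable)
      show "h k \<ge> 0" for k by (rule hnn)
      fix K
      have "(\<Sum>k\<le>K. h k) = 16 * real q * (\<Sum>n\<in>{nb 1<..nb (Suc (Suc K))}. g n)"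
        unfolding h_def by (simp add: sum_distrib_left[symmetric] lessThan_Suc_atMost[symmetric] hsum)
      also have "(\<Sum>n\<in>{nb 1<..nb (Suc (Suc K))}. g n) \<le> (\<Sum>n\<in>{1..nb (Suc (Suc K))}. g n)"
        by (rule sum_mono2) (use gnn in auto)
      also have "\<dots> = (\<Sum>n<nb (Suc (Suc K)). g (Suc n))"
        by (rule sum.reindex_bij_witness[of _ "\<lambda>n. Suc n" "\<lambda>n. n - 1"]) auto
      also have "\<dots> \<le> (\<Sum>n. g (Suc n))" by (rule sum_le_suminf[OF g_summ]) (use gnn in auto)
      finally show "(\<Sum>k\<le>K. h k) \<le> 16 * real q * (\<Sum>n. g (Suc n))" using q1 by simp
    qed
    have E'_summ: "summable (\<lambda>k. measure M (E' k))"
    proof (rule summable_comparison_test'[OF h_summ])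
      fix k :: nat
      show "norm (measure M (E' k)) \<le> h k"
        using Ebound[of k] hnn[of k] unfolding E'_def h_def by auto
    qed
    have E'meas: "E' k \<in> sets M" for k unfolding E'_def using Emeas by auto
    have "AE \<omega> in M. eventually (\<lambda>k. \<omega> \<in> space M - E' k) sequentially"
      by (rule borel_cantelli_AE1[OF E'meas _ E'_summ]) (simp add: emeasure_eq_measure)
    then show ?thesis
    proof (rule eventually_mono)
      fix \<omega> assume "eventually (\<lambda>k. \<omega> \<in> space M - E' k) sequentially"
      then obtain K1 where K1: "\<And>k. k \<ge> K1 \<Longrightarrow> \<omega> \<in> space M - E' k" by (auto simp: eventually_sequentially)
      define K where "K = max K0 K1"
      have notE: "\<omega> \<in> space M \<and> \<omega> \<notin> E k" if "k \<ge> K" for k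
        using K1[of k] that unfolding K_def E'_def by auto
      have "eventually (\<lambda>n. ereal (Tstat U V p n \<omega> / a n) \<le> ereal (lam * (1 + 3 * \<delta>))) sequentially"
        unfolding eventually_sequentially
      proof (intro exI allI impI)
        fix n assume n: "Suc (nb (Suc K)) \<le> n"
        define k2 where "k2 = (LEAST k. n \<le> nb k)"
        have k2a: "n \<le> nb k2" unfolding k2_def by (rule LeastI[of _ n]) (use nb_ge[of n] in simp)
        have k2b: "\<not> n \<le> nb k" if "k < k2" for k using not_less_Least[of k "\<lambda>k. n \<le> nb k"] that unfolding k2_def by simp
        have "k2 > Suc K"
        proof (rule ccontr)
          assume "\<not> k2 > Suc K"
          then have "nb k2 \<le> nb (Suc K)" by (intro nb_mono) simp
          then show False using k2a n by simp
        qed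
        then obtain k where k: "k2 = Suc (Suc k)" "k \<ge> K" by (metis Suc_le_D Suc_le_eq less_Suc_eq_le)
        have lo: "nb (Suc k) < n" using k2b[of "Suc k"] k by simp
        have hi: "n \<le> nb (Suc (Suc k))" using k2a k by simp
        have n1: "n \<ge> 1" using n by simp
        have an: "a n > 0" using apos n1 by simp
        have ne: "\<omega> \<in> space M" "\<omega> \<notin> E (Suc k)" using notE[of "Suc k"] k by auto
        have thr_le: "thr (Suc k) \<le> lam * (1 + 3 * \<delta>) * a n"
        proof -
          have "a (nb (Suc k)) \<le> a n" using amono[of "nb (Suc k)" n] nb_ge[of "Suc k"] lo by simp
          then show ?thesis unfolding thr_def using lam_pos \<delta> by (intro mult_left_mono) auto
        qed
        have T: "Tstat U V p n \<omega> \<le> lam * (1 + 3 * \<delta>) * a n"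
        proof (rule Tstat_le)
          show "0 \<le> lam * (1 + 3 * \<delta>) * a n" using lam_pos \<delta> an by simp
          fix i j assume ij: "1 \<le> i" "i \<le> p n" "1 \<le> j" "j \<le> p n" "i \<noteq> j"
          have "p n \<le> p (nb (Suc (Suc k)))" using pmono n1 hi by simp
          then have "\<bar>\<Sum>l=1..n. U l i \<omega> * V l j \<omega>\<bar> \<le> thr (Suc k)"
            using ne ij hi n1 unfolding E_def by (force simp: not_less)
          then show "\<bar>\<Sum>k=1..n. U k i \<omega> * V k j \<omega>\<bar> \<le> lam * (1 + 3 * \<delta>) * a n" using thr_le by simp
        qed
        then show "ereal (Tstat U V p n \<omega> / a n) \<le> ereal (lam * (1 + 3 * \<delta>))"
          using an by (simp add: pos_divide_le_eq)
      qed
      then show "limsup (\<lambda>n. ereal (Tstat U V p n \<omega> / a n)) \<le> ereal (lam * (1 + 3 * \<delta>))"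
        by (rule Limsup_bounded)
    qed
  qed
  have "AE \<omega> in M. \<forall>r::nat. limsup (\<lambda>n. ereal (Tstat U V p n \<omega> / a n)) \<le> ereal (lam * (1 + 3 * (1 / real (Suc r))))"
    unfolding AE_all_countable by (intro allI main) simp
  then show ?thesis
  proof (rule eventually_mono)
    fix \<omega>
    assume H: "\<forall>r::nat. limsup (\<lambda>n. ereal (Tstat U V p n \<omega> / a n)) \<le> ereal (lam * (1 + 3 * (1 / real (Suc r))))"
    define L where "L = limsup (\<lambda>n. ereal (Tstat U V p n \<omega> / a n))"
    show "limsup (\<lambda>n. ereal (Tstat U V p n \<omega> / a n)) \<le> ereal lam"
    proof (rule ccontr)
      assume "\<not> limsup (\<lambda>n. ereal (Tstat U V p n \<omega> / a n)) \<le> ereal lam"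
      then have "ereal lam < L" unfolding L_def by simp
      then obtain l where l1: "ereal lam < ereal l" and l2: "ereal l < L" using ereal_dense2 by blast
      then have ll: "lam < l" by simp
      obtain r :: nat where r: "3 * lam / (l - lam) < real r" using reals_Archimedean2 by blast
      have "3 * lam < real r * (l - lam)" using r ll by (simp add: pos_divide_less_eq)
      also have "\<dots> \<le> real (Suc r) * (l - lam)" using ll by (intro mult_right_mono) auto
      finally have "3 * lam / real (Suc r) < l - lam" by (simp add: pos_divide_less_eq mult.commute)
      then have "lam * (1 + 3 * (1 / real (Suc r))) < l" by (simp add: algebra_simps)
      then have c1: "ereal (lam * (1 + 3 * (1 / real (Suc r)))) < ereal l" by simp
      have c2: "L \<le> ereal (lam * (1 + 3 * (1 / real (Suc r))))" using H unfolding L_def by blast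
      have "L < L" using less_trans[OF le_less_trans[OF c2 c1] l2] .
      then show False by simp
    qed
  qed
qed


end
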